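(* Let $G=(V,E)$ be a connected, $d$-regular graph on $n$ vertices, let $A$ be its adjacency matrix and $D = d\cdot I_n$ the diagonal matrix of vertex degrees, and let $1 = \lambda_1 \geq |\lambda_2| \geq \dots \geq |\lambda_n| \geq 0$ be the eigenvalues of the symmetric matrix $AD^{-1}$, ordered by absolute value. Let $1 \leq \ell \leq n-1$. Then there exists a probability measure $\mu_0$ on $V$ supported on at most $\ell$ vertices such that the sequence of measures defined by $\mu_{k+1} = AD^{-1}\mu_k$ satisfies, for all integers $k \geq 0$, $$\sum_{v\in V}\left|\mu_k(v) - \frac{1}{n}\right|^2 \leq \lambda_{\ell+1}^{2k}.$$
   Context: Probability measures on $V=\{v_1,\dots,v_n\}$ are identified with vectors in $\mathbb{R}^n_{\geq 0}$ whose entries sum to $1$; the support of a measure is the set of vertices with nonzero mass. $AD^{-1}=\frac1d A$ acts on such vectors by matrix multiplication (this is one step of the simple random walk). *)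

theory Defs
  imports "Jordan_Normal_Form.Char_Poly"
begin

definition adjacency_matrix :: "nat \<Rightarrow> real mat \<Rightarrow> bool" where
  "adjacency_matrix n A \<longleftrightarrow> A \<in> carrier_mat n n \<and>
     (\<forall>i<n. \<forall>j<n. A $$ (i,j) = 0 \<or> A $$ (i,j) = 1) \<and>
     (\<forall>i<n. \<forall>j<n. A $$ (i,j) = A $$ (j,i)) \<and>
     (\<forall>i<n. A $$ (i,i) = 0)"

definition regular_graph :: "nat \<Rightarrow> real mat \<Rightarrow> nat \<Rightarrow> bool" where
  "regular_graph n A d \<longleftrightarrow> (\<forall>i<n. (\<Sum>j<n. A $$ (i,j)) = real d)"

definition graph_edges :: "nat \<Rightarrow> real mat \<Rightarrow> (nat \<times> nat) set" where
  "graph_edges n A = {(i,j). i < n \<and> j < n \<and> A $$ (i,j) = 1}"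

definition connected_graph :: "nat \<Rightarrow> real mat \<Rightarrow> bool" where
  "connected_graph n A \<longleftrightarrow> (\<forall>i<n. \<forall>j<n. (i,j) \<in> (graph_edges n A)\<^sup>*)"

text \<open>The list ls enumerates the eigenvalues of M with algebraic multiplicity
  (the characteristic polynomial splits with exactly these roots), ordered by
  non-increasing absolute value.\<close>

definition eigenvalues_by_abs :: "real mat \<Rightarrow> real list \<Rightarrow> bool" where
  "eigenvalues_by_abs M ls \<longleftrightarrow>
     char_poly M = (\<Prod>a\<leftarrow>ls. [:- a, 1:]) \<and>
     sorted_wrt (\<lambda>x y. \<bar>x\<bar> \<ge> \<bar>y\<bar>) ls"

end

theory Submission imports Defs "Jordan_Normal_Form.Schur_Decomposition" "HOL-Analysis.L2_Norm" begin

fun mp :: "real mat \<Rightarrow> real list \<Rightarrow> real mat" where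
  "mp M [] = 1\<^sub>m (dim_row M)"
| "mp M (a # L) = (M - a \<cdot>\<^sub>m 1\<^sub>m (dim_row M)) * mp M L"

lemma mp_carrier: "M \<in> carrier_mat n n \<Longrightarrow> mp M L \<in> carrier_mat n n"
  by (induct L) auto

lemma fac_left: fixes M X :: "real mat" assumes M: "M \<in> carrier_mat n n" and X: "X \<in> carrier_mat n n"
  shows "(M - a \<cdot>\<^sub>m 1\<^sub>m n) * X = M * X - a \<cdot>\<^sub>m X"
proof -
  have "(M - a \<cdot>\<^sub>m 1\<^sub>m n) * X = M * X - (a \<cdot>\<^sub>m 1\<^sub>m n) * X"
    by (rule minus_mult_distrib_mat[OF M _ X], simp)
  also have "(a \<cdot>\<^sub>m 1\<^sub>m n) * X = a \<cdot>\<^sub>m (1\<^sub>m n * X)"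
    using mult_smult_assoc_mat[OF one_carrier_mat X] .
  finally show ?thesis using X by simp
qed

lemma fac_right: fixes M X :: "real mat" assumes M: "M \<in> carrier_mat n n" and X: "X \<in> carrier_mat n n"
  shows "X * (M - a \<cdot>\<^sub>m 1\<^sub>m n) = X * M - a \<cdot>\<^sub>m X"
proof -
  have "X * (M - a \<cdot>\<^sub>m 1\<^sub>m n) = X * M - X * (a \<cdot>\<^sub>m 1\<^sub>m n)"
    by (rule mult_minus_distrib_mat[OF X M], simp)
  also have "X * (a \<cdot>\<^sub>m 1\<^sub>m n) = a \<cdot>\<^sub>m (X * 1\<^sub>m n)"
    using mult_smult_distrib[OF X one_carrier_mat] .
  finally show ?thesis using X by simp
qed

lemma fac_comm_gen: fixes M X :: "real mat" assumes M: "M \<in> carrier_mat n n" and X: "X \<in> carrier_mat n n"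
  and c: "X * M = M * X"
  shows "(M - a \<cdot>\<^sub>m 1\<^sub>m n) * X = X * (M - a \<cdot>\<^sub>m 1\<^sub>m n)"
  unfolding fac_left[OF M X] fac_right[OF M X] c ..

lemma mp_comm: assumes M: "M \<in> carrier_mat n n"
  shows "mp M L * M = M * mp M L"
proof (induct L)
  case Nil then show ?case using M by simp
next
  case (Cons b L)
  let ?G = "M - b \<cdot>\<^sub>m 1\<^sub>m n"
  have G: "?G \<in> carrier_mat n n" using M by auto
  have HL: "mp M L \<in> carrier_mat n n" using mp_carrier[OF M] .
  have GM: "?G * M = M * ?G" using fac_comm_gen[OF M M refl] .
  have "mp M (b # L) * M = ?G * (mp M L * M)" using M G HL by simp
  also have "\<dots> = (?G * M) * mp M L" using Cons M G HL by simp
  also have "\<dots> = M * (?G * mp M L)" unfolding GM using M G HL by simp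
  also have "\<dots> = M * mp M (b # L)" using M by simp
  finally show ?case .
qed

lemma mp_comm_fac: assumes M: "M \<in> carrier_mat n n"
  shows "(M - a \<cdot>\<^sub>m 1\<^sub>m n) * mp M L = mp M L * (M - a \<cdot>\<^sub>m 1\<^sub>m n)"
  by (rule fac_comm_gen[OF M mp_carrier[OF M] mp_comm[OF M]])

lemma mp_append: assumes M: "M \<in> carrier_mat n n"
  shows "mp M (L1 @ L2) = mp M L1 * mp M L2"
proof (induct L1)
  case Nil
  have "dim_row (mp M L2) = n" using mp_carrier[OF M] by auto
  then show ?case using M by (simp add: carrier_matD)
next
  case (Cons a L1)
  have F: "M - a \<cdot>\<^sub>m 1\<^sub>m n \<in> carrier_mat n n" using M by auto
  show ?case using Cons M by (simp add: assoc_mult_mat[OF F mp_carrier[OF M] mp_carrier[OF M]] carrier_matD)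
qed

lemma conj_mult: fixes X Y P Q :: "real mat"
  assumes X: "X \<in> carrier_mat n n" and Y: "Y \<in> carrier_mat n n" and P: "P \<in> carrier_mat n n"
  and Q: "Q \<in> carrier_mat n n" and QP: "Q * P = 1\<^sub>m n"
  shows "(P * X * Q) * (P * Y * Q) = P * (X * Y) * Q"
proof -
  have "(P * X * Q) * (P * Y * Q) = P * (X * ((Q * P) * (Y * Q)))"
    using X Y P Q by (simp add: assoc_mult_mat[of _ n n _ n _ n])
  also have "\<dots> = P * (X * (Y * Q))" using QP Y Q by simp
  also have "\<dots> = P * (X * Y) * Q" using X Y P Q by (simp add: assoc_mult_mat[of _ n n _ n _ n])
  finally show ?thesis .
qed

lemma mp_sim: fixes A B P Q :: "real mat" 
  assumes A: "A \<in> carrier_mat n n" and B: "B \<in> carrier_mat n n" and P: "P \<in> carrier_mat n n"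
  and Q: "Q \<in> carrier_mat n n" and PQ: "P * Q = 1\<^sub>m n" and QP: "Q * P = 1\<^sub>m n" and e: "A = P * B * Q"
  shows "mp A L = P * mp B L * Q"
proof (induct L)
  case Nil 
  have "P * 1\<^sub>m n * Q = 1\<^sub>m n" using P Q PQ by simp
  then show ?case using A B by (simp add: carrier_matD)
next
  case (Cons a L)
  have BL: "mp B L \<in> carrier_mat n n" using mp_carrier[OF B] .
  have Ba: "B - a \<cdot>\<^sub>m 1\<^sub>m n \<in> carrier_mat n n" using B by auto
  have AF: "A - a \<cdot>\<^sub>m 1\<^sub>m n = P * (B - a \<cdot>\<^sub>m 1\<^sub>m n) * Q"
  proof -
    have "P * (B - a \<cdot>\<^sub>m 1\<^sub>m n) * Q = (P * B - a \<cdot>\<^sub>m P) * Q" using fac_right[OF B P] by simp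
    also have "\<dots> = P * B * Q - (a \<cdot>\<^sub>m P) * Q"
      by (rule minus_mult_distrib_mat[OF _ _ Q], insert P B, auto)
    also have "(a \<cdot>\<^sub>m P) * Q = a \<cdot>\<^sub>m (P * Q)" using mult_smult_assoc_mat[OF P Q] .
    finally show ?thesis unfolding PQ e[symmetric] by simp
  qed
  have "mp A (a # L) = (A - a \<cdot>\<^sub>m 1\<^sub>m n) * mp A L" using A by (simp add: carrier_matD)
  also have "\<dots> = (P * (B - a \<cdot>\<^sub>m 1\<^sub>m n) * Q) * (P * mp B L * Q)" unfolding AF Cons ..
  also have "\<dots> = P * ((B - a \<cdot>\<^sub>m 1\<^sub>m n) * mp B L) * Q"
    by (rule conj_mult[OF Ba BL P Q QP])
  also have "\<dots> = P * mp B (a # L) * Q" using B by (simp add: carrier_matD)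
  finally show ?case .
qed


lemma smult_one_mult_vec: fixes x :: "real vec" assumes x: "x \<in> carrier_vec n"
  shows "(a \<cdot>\<^sub>m 1\<^sub>m n) *\<^sub>v x = a \<cdot>\<^sub>v x"
proof -
  have "(a \<cdot>\<^sub>m A) *\<^sub>v x = a \<cdot>\<^sub>v (A *\<^sub>v x)" if A: "A \<in> carrier_mat n n" for A :: "real mat"
    by (rule eq_vecI, insert x A, auto simp: scalar_prod_def sum_distrib_left mult.assoc)
  from this[of "1\<^sub>m n"] show ?thesis using x by simp
qed

lemma fac_vec: fixes M :: "real mat" assumes M: "M \<in> carrier_mat n n" and x: "x \<in> carrier_vec n"
  shows "(M - a \<cdot>\<^sub>m 1\<^sub>m n) *\<^sub>v x = M *\<^sub>v x - a \<cdot>\<^sub>v x"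
  using minus_mult_distrib_mat_vec[OF M _ x, of "a \<cdot>\<^sub>m 1\<^sub>m n"] smult_one_mult_vec[OF x] by simp

lemma pow_suc_vec: fixes M :: "real mat" assumes M: "M \<in> carrier_mat n n" and x: "x \<in> carrier_vec n"
  shows "(M ^\<^sub>m Suc k) *\<^sub>v x = (M ^\<^sub>m k) *\<^sub>v (M *\<^sub>v x)"
  using M x by (simp add: assoc_mult_mat_vec[of _ n n _ n])

lemma pow_carrier_vec: fixes M :: "real mat" assumes M: "M \<in> carrier_mat n n" and x: "x \<in> carrier_vec n"
  shows "(M ^\<^sub>m k) *\<^sub>v x \<in> carrier_vec n"
  by (rule mult_mat_vec_carrier[OF pow_carrier_mat[OF M] x])

definition nv :: "real vec \<Rightarrow> real" where
  "nv z = L2_set (\<lambda>i. z $ i) {0..<dim_vec z}"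

lemma nv_nonneg: "nv z \<ge> 0" unfolding nv_def by (rule L2_set_nonneg)

lemma nv_sq: "nv z ^ 2 = z \<bullet> z"
  unfolding nv_def scalar_prod_def L2_set_def by (simp add: power2_eq_square abs_of_nonneg sum_nonneg)

lemma nv_add: assumes "a \<in> carrier_vec n" "b \<in> carrier_vec n"
  shows "nv (a + b) \<le> nv a + nv b"
proof -
  have "nv (a + b) = L2_set (\<lambda>i. a $ i + b $ i) {0..<n}" unfolding nv_def using assms
    by (intro L2_set_cong) auto
  also have "\<dots> \<le> L2_set (\<lambda>i. a $ i) {0..<n} + L2_set (\<lambda>i. b $ i) {0..<n}" by (rule L2_set_triangle_ineq)
  finally show ?thesis unfolding nv_def using assms by simp
qed

lemma nv_smult: "nv (c \<cdot>\<^sub>v a) = \<bar>c\<bar> * nv a"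
proof -
  have "nv (c \<cdot>\<^sub>v a) = L2_set (\<lambda>i. c * a $ i) {0..<dim_vec a}" unfolding nv_def
    by (intro L2_set_cong) auto
  also have "\<dots> = L2_set (\<lambda>i. \<bar>c\<bar> * a $ i) {0..<dim_vec a}"
    unfolding L2_set_def by (simp add: power_mult_distrib)
  finally show ?thesis unfolding nv_def by (simp add: L2_set_right_distrib)
qed

lemma nv_cs: assumes "a \<in> carrier_vec n" "b \<in> carrier_vec n"
  shows "\<bar>a \<bullet> b\<bar> \<le> nv a * nv b"
proof -
  have "\<bar>a \<bullet> b\<bar> \<le> (\<Sum>i\<in>{0..<n}. \<bar>a $ i\<bar> * \<bar>b $ i\<bar>)"
    unfolding scalar_prod_def using assms by (auto intro: order.trans[OF sum_abs] simp: abs_mult)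
  also have "\<dots> \<le> nv a * nv b" unfolding nv_def using assms L2_set_mult_ineq by auto
  finally show ?thesis .
qed

lemma growth: fixes M :: "real mat" assumes M: "M \<in> carrier_mat n n"
  and st: "t < s"
  shows "(\<forall>a\<in>set L. \<bar>a\<bar> \<le> t) \<Longrightarrow> x \<in> carrier_vec n \<Longrightarrow> mp M L *\<^sub>v x = 0\<^sub>v n \<Longrightarrow>
    \<exists>C. \<forall>k. nv ((M ^\<^sub>m k) *\<^sub>v x) \<le> C * s ^ k"
proof (induct L arbitrary: x)
  case Nil
  then have "x = 0\<^sub>v n" using M by (simp add: carrier_matD)
  then have "nv ((M ^\<^sub>m k) *\<^sub>v x) \<le> 0 * s ^ k" for k
    using M by (simp add: nv_def L2_set_def)
  then show ?case by blast
next
  case (Cons a L)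
  have x: "x \<in> carrier_vec n" by fact
  define w where "w = (M - a \<cdot>\<^sub>m 1\<^sub>m n) *\<^sub>v x"
  have F: "M - a \<cdot>\<^sub>m 1\<^sub>m n \<in> carrier_mat n n" using M by auto
  have w: "w \<in> carrier_vec n" unfolding w_def by (rule mult_mat_vec_carrier[OF F x])
  have "mp M L *\<^sub>v w = (mp M L * (M - a \<cdot>\<^sub>m 1\<^sub>m n)) *\<^sub>v x"
    unfolding w_def using assoc_mult_mat_vec[OF mp_carrier[OF M] F x] by simp
  also have "\<dots> = mp M (a # L) *\<^sub>v x"
    unfolding mp_comm_fac[OF M, symmetric] using M by (simp add: carrier_matD)
  finally have "mp M L *\<^sub>v w = 0\<^sub>v n" using Cons by simp
  with Cons(1)[OF _ w] Cons(2) obtain C where C: "\<And>k. nv ((M ^\<^sub>m k) *\<^sub>v w) \<le> C * s ^ k" by auto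
  have at: "\<bar>a\<bar> \<le> t" using Cons(2) by auto
  have sa: "s - \<bar>a\<bar> > 0" using at st by simp
  define B where "B = max (nv x) (C / (s - \<bar>a\<bar>))"
  have CB: "C \<le> B * (s - \<bar>a\<bar>)" using sa unfolding B_def
    by (metis max.cobounded2 mult_le_cancel_right_pos nonzero_eq_divide_eq order_less_irrefl)
  have Mx: "M *\<^sub>v x = a \<cdot>\<^sub>v x + w" unfolding w_def fac_vec[OF M x]
    by (rule eq_vecI, insert M x, auto)
  have "nv ((M ^\<^sub>m k) *\<^sub>v x) \<le> B * s ^ k" for k
  proof (induct k)
    case 0 then show ?case using M x by (simp add: B_def carrier_matD)
  next
    case (Suc k)
    have Pk: "M ^\<^sub>m k \<in> carrier_mat n n" using M by simp
    have "(M ^\<^sub>m Suc k) *\<^sub>v x = a \<cdot>\<^sub>v ((M ^\<^sub>m k) *\<^sub>v x) + (M ^\<^sub>m k) *\<^sub>v w"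
      unfolding pow_suc_vec[OF M x] Mx
      using mult_add_distrib_mat_vec[OF Pk _ w, of "a \<cdot>\<^sub>v x"] mult_mat_vec[OF Pk x] x by simp
    then have "nv ((M ^\<^sub>m Suc k) *\<^sub>v x) \<le> \<bar>a\<bar> * nv ((M ^\<^sub>m k) *\<^sub>v x) + nv ((M ^\<^sub>m k) *\<^sub>v w)"
      using nv_add[of "a \<cdot>\<^sub>v ((M ^\<^sub>m k) *\<^sub>v x)" n "(M ^\<^sub>m k) *\<^sub>v w"] Pk x w nv_smult by simp
    also have "\<dots> \<le> \<bar>a\<bar> * (B * s ^ k) + C * s ^ k"
      using Suc C[of k] by (intro add_mono mult_left_mono) auto
    also have "\<dots> \<le> \<bar>a\<bar> * (B * s ^ k) + B * (s - \<bar>a\<bar>) * s ^ k"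
      using CB sa at st by (intro add_left_mono mult_right_mono) auto
    also have "\<dots> = B * s ^ Suc k" by (simp add: algebra_simps)
    finally show ?case .
  qed
  then show ?case by blast
qed


lemma pow_comm: fixes M :: "real mat" assumes M: "M \<in> carrier_mat n n"
  shows "M ^\<^sub>m k * M = M * M ^\<^sub>m k"
proof (induct k)
  case 0 then show ?case using M by (simp add: carrier_matD)
next
  case (Suc k)
  have Pk: "M ^\<^sub>m k \<in> carrier_mat n n" using M by simp
  have "M ^\<^sub>m Suc k * M = (M ^\<^sub>m k * M) * M" by simp
  also have "\<dots> = (M * M ^\<^sub>m k) * M" using Suc by simp
  also have "\<dots> = M * (M ^\<^sub>m k * M)" using assoc_mult_mat[OF M Pk M] .
  finally show ?case by simp
qed

lemma pow_suc_vec': fixes M :: "real mat" assumes M: "M \<in> carrier_mat n n" and x: "x \<in> carrier_vec n"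
  shows "(M ^\<^sub>m Suc k) *\<^sub>v x = M *\<^sub>v ((M ^\<^sub>m k) *\<^sub>v x)"
proof -
  have "(M ^\<^sub>m Suc k) *\<^sub>v x = (M * M ^\<^sub>m k) *\<^sub>v x" using pow_comm[OF M, of k] by simp
  also have "\<dots> = M *\<^sub>v ((M ^\<^sub>m k) *\<^sub>v x)" using M x by (simp add: assoc_mult_mat_vec[of _ n n _ n])
  finally show ?thesis .
qed

definition symm :: "nat \<Rightarrow> real mat \<Rightarrow> bool" where
  "symm n M \<longleftrightarrow> M \<in> carrier_mat n n \<and> (\<forall>i<n. \<forall>j<n. M $$ (i,j) = M $$ (j,i))"

lemma symm_dot: assumes S: "symm n M" and a: "a \<in> carrier_vec n" and b: "b \<in> carrier_vec n"
  shows "(M *\<^sub>v a) \<bullet> b = a \<bullet> (M *\<^sub>v b)"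
proof -
  have M: "M \<in> carrier_mat n n" using S unfolding symm_def by auto
  have T: "transpose_mat M = M" using S unfolding symm_def by (intro eq_matI) auto
  have "(M *\<^sub>v a) \<bullet> b = b \<bullet> (M *\<^sub>v a)" using M a b by (simp add: comm_scalar_prod[of _ n])
  also have "\<dots> = (transpose_mat M *\<^sub>v b) \<bullet> a" using transpose_vec_mult_scalar[OF M a b] by simp
  also have "\<dots> = a \<bullet> (M *\<^sub>v b)" unfolding T using M a b by (simp add: comm_scalar_prod[of _ n])
  finally show ?thesis .
qed

lemma logconv: assumes S: "symm n M" and x: "x \<in> carrier_vec n"
  shows "nv ((M ^\<^sub>m Suc k) *\<^sub>v x) ^ 2 \<le> nv ((M ^\<^sub>m k) *\<^sub>v x) * nv ((M ^\<^sub>m Suc (Suc k)) *\<^sub>v x)"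
proof -
  have M: "M \<in> carrier_mat n n" using S unfolding symm_def by auto
  let ?y = "\<lambda>k. (M ^\<^sub>m k) *\<^sub>v x"
  have y: "?y k \<in> carrier_vec n" for k using pow_carrier_vec[OF M x] .
  have "nv (?y (Suc k)) ^ 2 = ?y (Suc k) \<bullet> ?y (Suc k)" by (rule nv_sq)
  also have "\<dots> = (M *\<^sub>v ?y k) \<bullet> ?y (Suc k)" unfolding pow_suc_vec'[OF M x, of k] ..
  also have "\<dots> = ?y k \<bullet> (M *\<^sub>v ?y (Suc k))" by (rule symm_dot[OF S y y])
  also have "\<dots> = ?y k \<bullet> ?y (Suc (Suc k))" unfolding pow_suc_vec'[OF M x, of "Suc k"] ..
  also have "\<dots> \<le> \<bar>?y k \<bullet> ?y (Suc (Suc k))\<bar>" by simp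
  also have "\<dots> \<le> nv (?y k) * nv (?y (Suc (Suc k)))" by (rule nv_cs[OF y y])
  finally show ?thesis .
qed

lemma main_bound: assumes S: "symm n M" and x: "x \<in> carrier_vec n"
  and L: "mp M L *\<^sub>v x = 0\<^sub>v n" and bd: "\<forall>a\<in>set L. \<bar>a\<bar> \<le> t" and t: "0 \<le> t"
  shows "nv ((M ^\<^sub>m k) *\<^sub>v x) ^ 2 \<le> t ^ (2 * k) * nv x ^ 2"
proof -
  have M: "M \<in> carrier_mat n n" using S unfolding symm_def by auto
  define a where "a = (\<lambda>k. nv ((M ^\<^sub>m k) *\<^sub>v x) ^ 2)"
  have a0: "a k \<ge> 0" for k unfolding a_def by simp
  have lc: "a (Suc k) ^ 2 \<le> a k * a (Suc (Suc k))" for k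
  proof -
    have "a (Suc k) ^ 2 = (nv ((M ^\<^sub>m Suc k) *\<^sub>v x) ^ 2) ^ 2" unfolding a_def ..
    also have "\<dots> \<le> (nv ((M ^\<^sub>m k) *\<^sub>v x) * nv ((M ^\<^sub>m Suc (Suc k)) *\<^sub>v x)) ^ 2"
      by (rule power_mono[OF logconv[OF S x]], simp)
    also have "\<dots> = a k * a (Suc (Suc k))" unfolding a_def by (simp add: power_mult_distrib)
    finally show ?thesis .
  qed
  have step: "a (Suc k) \<le> t\<^sup>2 * a k" for k
  proof (rule ccontr)
    assume "\<not> ?thesis"
    then have gt: "a (Suc k) > t\<^sup>2 * a k" by simp
    have ak: "a k > 0"
    proof (rule ccontr)
      assume "\<not> a k > 0"
      then have "a k = 0" using a0[of k] by simp
      then have "a (Suc k) ^ 2 \<le> 0" using lc[of k] by simp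
      then have "a (Suc k) = 0" by simp
      then show False using gt \<open>a k = 0\<close> by simp
    qed
    define \<rho> where "\<rho> = a (Suc k) / a k"
    have \<rho>t: "\<rho> > t\<^sup>2" using gt ak unfolding \<rho>_def by (simp add: field_simps)
    have \<rho>0: "\<rho> > 0" using \<rho>t by (smt (verit) zero_le_power2)
    have grow: "a (k + j) > 0 \<and> a (k + Suc j) \<ge> \<rho> * a (k + j)" for j
    proof (induct j)
      case 0 then show ?case using ak unfolding \<rho>_def by simp
    next
      case (Suc j)
      have p: "a (k + j) > 0" and q: "a (k + Suc j) \<ge> \<rho> * a (k + j)" using Suc by auto
      have p2: "a (k + Suc j) > 0" using p q \<rho>0 by (smt (verit) mult_pos_pos)
      have "a (k + Suc j) ^ 2 \<le> a (k + j) * a (k + Suc (Suc j))" using lc[of "k + j"] by simp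
      moreover have "a (k + Suc j) ^ 2 \<ge> \<rho> * a (k + j) * a (k + Suc j)"
        using q p2 by (simp add: power2_eq_square mult_right_mono)
      ultimately have "\<rho> * a (k + j) * a (k + Suc j) \<le> a (k + j) * a (k + Suc (Suc j))" by simp
      then have "\<rho> * a (k + Suc j) \<le> a (k + Suc (Suc j))" using p
        by (simp add: mult.assoc mult.left_commute[of \<rho>])
      then show ?case using p2 by simp
    qed
    have lowb: "a (k + j) \<ge> \<rho> ^ j * a k" for j
    proof (induct j)
      case 0 then show ?case by simp
    next
      case (Suc j)
      have "\<rho> ^ Suc j * a k = \<rho> * (\<rho> ^ j * a k)" by simp
      also have "\<dots> \<le> \<rho> * a (k + j)" using Suc \<rho>0 by (simp add: mult_left_mono)
      also have "\<dots> \<le> a (k + Suc j)" using grow[of j] by simp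
      finally show ?case by simp
    qed
    define s where "s = sqrt ((t\<^sup>2 + \<rho>) / 2)"
    have s0: "s \<ge> 0" unfolding s_def using \<rho>0 by simp
    have ss: "s\<^sup>2 = (t\<^sup>2 + \<rho>) / 2" unfolding s_def using \<rho>0 by simp
    have st2: "t\<^sup>2 < s\<^sup>2" using ss \<rho>t by simp
    have st: "t < s" using st2 s0 t by (smt (verit) power_mono)
    have sr: "s\<^sup>2 < \<rho>" using ss \<rho>t by simp
    have spos: "s\<^sup>2 > 0" using st2 by (smt (verit) zero_le_power2)
    obtain C where C: "\<And>k. nv ((M ^\<^sub>m k) *\<^sub>v x) \<le> C * s ^ k"
      using growth[OF M st, of L x] bd x L by blast
    have up: "a m \<le> C\<^sup>2 * (s\<^sup>2) ^ m" for m
    proof -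
      have "a m \<le> (C * s ^ m) ^ 2" unfolding a_def by (rule power_mono[OF C], simp add: nv_nonneg)
      then show ?thesis by (simp add: power_mult_distrib power_mult[symmetric] mult.commute[of 2])
    qed
    define r where "r = \<rho> / s\<^sup>2"
    have r1: "r > 1" unfolding r_def using sr spos by simp
    define K where "K = C\<^sup>2 * (s\<^sup>2) ^ k / a k"
    have "r ^ j \<le> K" for j
    proof -
      have "\<rho> ^ j * a k \<le> C\<^sup>2 * (s\<^sup>2) ^ (k + j)" using lowb[of j] up[of "k + j"] by simp
      then have "(r ^ j * (s\<^sup>2) ^ j) * a k \<le> C\<^sup>2 * (s\<^sup>2) ^ k * (s\<^sup>2) ^ j"
        unfolding r_def using spos by (simp add: power_divide power_add mult_ac)
      then have "r ^ j * a k \<le> C\<^sup>2 * (s\<^sup>2) ^ k" using spos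
        by (smt (verit, ccfv_SIG) mult.commute mult.left_commute mult_le_cancel_left_pos zero_less_power)
      then show ?thesis unfolding K_def using ak by (simp add: field_simps)
    qed
    moreover obtain j where "K < r ^ j" using real_arch_pow[OF r1] by blast
    ultimately show False by (smt (verit))
  qed
  have "a k \<le> t ^ (2 * k) * a 0" for k
  proof (induct k)
    case 0 then show ?case by simp
  next
    case (Suc k)
    have "a (Suc k) \<le> t\<^sup>2 * a k" by (rule step)
    also have "\<dots> \<le> t\<^sup>2 * (t ^ (2 * k) * a 0)" using Suc by (simp add: mult_left_mono)
    also have "\<dots> = t ^ (2 * Suc k) * a 0" by (simp add: power_add power_mult mult_ac power2_eq_square)
    finally show ?case .
  qed
  then show ?thesis unfolding a_def using M x by (simp add: carrier_matD)
qed


lemma tri_kill: fixes B :: "real mat" assumes B: "B \<in> carrier_mat n n" and ut: "upper_triangular B"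
  and dg: "diag_mat B = es"
  shows "k \<le> n \<Longrightarrow> v \<in> carrier_vec n \<Longrightarrow> (\<forall>i. k \<le> i \<longrightarrow> i < n \<longrightarrow> v $ i = 0) \<Longrightarrow>
    mp B (take k es) *\<^sub>v v = 0\<^sub>v n"
proof (induct k arbitrary: v)
  case 0
  then have "v = 0\<^sub>v n" by (intro eq_vecI) auto
  then show ?case using B by (simp add: carrier_matD)
next
  case (Suc k)
  have len: "length es = n" using dg B unfolding diag_mat_def by auto
  have tk: "take (Suc k) es = take k es @ [es ! k]" using Suc(2) len by (simp add: take_Suc_conv_app_nth)
  have esk: "es ! k = B $$ (k,k)" using dg Suc(2) B unfolding diag_mat_def by auto
  have F: "B - es ! k \<cdot>\<^sub>m 1\<^sub>m n \<in> carrier_mat n n" using B by auto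
  define w where "w = (B - es ! k \<cdot>\<^sub>m 1\<^sub>m n) *\<^sub>v v"
  have w: "w \<in> carrier_vec n" unfolding w_def by (rule mult_mat_vec_carrier[OF F Suc(3)])
  have wz: "w $ i = 0" if i: "k \<le> i" "i < n" for i
  proof -
    have "w $ i = (B *\<^sub>v v) $ i - es ! k * v $ i" unfolding w_def fac_vec[OF B Suc(3)] using i B Suc(3) by simp
    also have "(B *\<^sub>v v) $ i = (\<Sum>j\<in>{0..<n}. B $$ (i,j) * v $ j)"
      using i B Suc(3) by (simp add: scalar_prod_def)
    also have "\<dots> = (\<Sum>j\<in>{0..<n}. if j = i then B $$ (i,i) * v $ i else 0)"
    proof (rule sum.cong[OF refl])
      fix j assume j: "j \<in> {0..<n}"
      show "B $$ (i,j) * v $ j = (if j = i then B $$ (i,i) * v $ i else 0)"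
      proof (cases "j < i")
        case True then show ?thesis using ut i B unfolding upper_triangular_def by auto
      next
        case False
        then show ?thesis using Suc(4) i j by auto
      qed
    qed
    also have "\<dots> = B $$ (i,i) * v $ i" using i by simp
    finally show ?thesis using Suc(4) i esk by (cases "i = k") auto
  qed
  have "mp B (take (Suc k) es) *\<^sub>v v = (mp B (take k es) * mp B [es ! k]) *\<^sub>v v"
    unfolding tk mp_append[OF B] ..
  also have "mp B [es ! k] = B - es ! k \<cdot>\<^sub>m 1\<^sub>m n" using B F by (simp add: carrier_matD)
  also have "(mp B (take k es) * (B - es ! k \<cdot>\<^sub>m 1\<^sub>m n)) *\<^sub>v v = mp B (take k es) *\<^sub>v w"
    unfolding w_def using assoc_mult_mat_vec[OF mp_carrier[OF B] F Suc(3)] .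
  also have "\<dots> = 0\<^sub>v n" using Suc(1)[OF _ w] Suc(2) wz by auto
  finally show ?case .
qed

lemma nontriv_kernel: fixes N :: "real mat" assumes N: "N \<in> carrier_mat r c" and rc: "r < c"
  shows "\<exists>v. v \<in> carrier_vec c \<and> v \<noteq> 0\<^sub>v c \<and> N *\<^sub>v v = 0\<^sub>v r"
proof -
  define f where "f = (\<lambda>i. if i < r then row N i else 0\<^sub>v c)"
  define N' where "N' = mat\<^sub>r c c (\<lambda>i. if i = c - 1 then 0\<^sub>v c else f i)"
  have N': "N' \<in> carrier_mat c c" unfolding N'_def by simp
  have "det N' = 0" unfolding N'_def
    by (rule det_row_0, insert rc N, auto simp: f_def)
  then obtain v where v: "v \<in> carrier_vec c" "v \<noteq> 0\<^sub>v c" "N' *\<^sub>v v = 0\<^sub>v c"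
    using det_0_iff_vec_prod_zero[OF N'] by auto
  have "N *\<^sub>v v = 0\<^sub>v r"
  proof (rule eq_vecI)
    fix i assume "i < dim_vec (0\<^sub>v r :: real vec)"
    then have i: "i < r" by simp
    have "(N' *\<^sub>v v) $ i = 0" using v(3) i rc by simp
    moreover have "(N' *\<^sub>v v) $ i = row N i \<bullet> v" using i rc N unfolding N'_def f_def
      by (simp add: row_mat_of_row_fun)
    ultimately show "(N *\<^sub>v v) $ i = 0\<^sub>v r $ i" using i N by simp
  qed (insert N, simp)
  then show ?thesis using v by blast
qed


lemma colsum_mult: fixes M :: "real mat" assumes M: "M \<in> carrier_mat n n"
  and cs: "\<forall>j<n. (\<Sum>i<n. M $$ (i,j)) = 1" and y: "y \<in> carrier_vec n"
  shows "(\<Sum>i<n. (M *\<^sub>v y) $ i) = (\<Sum>i<n. y $ i)"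
proof -
  have "(\<Sum>i<n. (M *\<^sub>v y) $ i) = (\<Sum>i<n. \<Sum>j<n. M $$ (i,j) * y $ j)"
    using M y by (intro sum.cong) (auto simp: scalar_prod_def atLeast0LessThan)
  also have "\<dots> = (\<Sum>j<n. \<Sum>i<n. M $$ (i,j) * y $ j)" by (rule sum.swap)
  also have "\<dots> = (\<Sum>j<n. (\<Sum>i<n. M $$ (i,j)) * y $ j)" by (simp add: sum_distrib_right)
  also have "\<dots> = (\<Sum>j<n. y $ j)" using cs by simp
  finally show ?thesis .
qed

lemma colsum_mp: fixes M :: "real mat" assumes M: "M \<in> carrier_mat n n"
  and cs: "\<forall>j<n. (\<Sum>i<n. M $$ (i,j)) = 1" and z: "z \<in> carrier_vec n"
  shows "(\<Sum>i<n. (mp M L *\<^sub>v z) $ i) = (\<Prod>a\<leftarrow>L. (1 - a)) * (\<Sum>i<n. z $ i)"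
proof (induct L)
  case Nil then show ?case using M z by (simp add: carrier_matD)
next
  case (Cons a L)
  define y where "y = mp M L *\<^sub>v z"
  have y: "y \<in> carrier_vec n" unfolding y_def by (rule mult_mat_vec_carrier[OF mp_carrier[OF M] z])
  have F: "M - a \<cdot>\<^sub>m 1\<^sub>m n \<in> carrier_mat n n" using M by auto
  have "mp M (a # L) *\<^sub>v z = (M - a \<cdot>\<^sub>m 1\<^sub>m n) *\<^sub>v y"
    unfolding y_def using M assoc_mult_mat_vec[OF F mp_carrier[OF M] z] by (simp add: carrier_matD)
  also have "\<dots> = M *\<^sub>v y - a \<cdot>\<^sub>v y" by (rule fac_vec[OF M y])
  finally have e: "mp M (a # L) *\<^sub>v z = M *\<^sub>v y - a \<cdot>\<^sub>v y" .
  have "(\<Sum>i<n. (mp M (a # L) *\<^sub>v z) $ i) = (\<Sum>i<n. (M *\<^sub>v y) $ i - a * y $ i)"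
    unfolding e using M y by (intro sum.cong) auto
  also have "\<dots> = (\<Sum>i<n. (M *\<^sub>v y) $ i) - a * (\<Sum>i<n. y $ i)"
    by (simp add: sum_subtractf sum_distrib_left)
  also have "\<dots> = (1 - a) * (\<Sum>i<n. y $ i)" using colsum_mult[OF M cs y] by (simp add: algebra_simps)
  also have "\<dots> = (\<Prod>a\<leftarrow>a # L. (1 - a)) * (\<Sum>i<n. z $ i)" using Cons unfolding y_def by simp
  finally show ?case .
qed

lemma bfs: fixes G P0 Q0 :: "real mat"
  assumes G: "G \<in> carrier_mat n n" and P0: "P0 \<in> carrier_mat n n" and Q0: "Q0 \<in> carrier_mat n n"
  and QP: "Q0 * P0 = 1\<^sub>m n"
  and ker: "\<And>w. w \<in> carrier_vec n \<Longrightarrow> (\<forall>i. m \<le> i \<longrightarrow> i < n \<longrightarrow> w $ i = 0) \<Longrightarrow> G *\<^sub>v (P0 *\<^sub>v w) = 0\<^sub>v n"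
  and sz: "\<And>z. z \<in> carrier_vec n \<Longrightarrow> G *\<^sub>v z = 0\<^sub>v n \<Longrightarrow> (\<Sum>i<n. z $ i) = 0"
  and mn: "m + l = n"
  and u: "u \<in> carrier_vec n" "\<forall>i<n. u $ i \<ge> 0" "(\<Sum>i<n. u $ i) = 1"
  shows "\<exists>\<mu>. \<mu> \<in> carrier_vec n \<and> (\<forall>i<n. \<mu> $ i \<ge> 0) \<and> (\<Sum>i<n. \<mu> $ i) = 1 \<and>
     G *\<^sub>v \<mu> = G *\<^sub>v u \<and> card {i. i < n \<and> \<mu> $ i \<noteq> 0} \<le> l"
proof -
  define feas where "feas = (\<lambda>\<mu>. \<mu> \<in> carrier_vec n \<and> (\<forall>i<n. \<mu> $ i \<ge> 0) \<and> (\<Sum>i<n. \<mu> $ i) = 1 \<and>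
     G *\<^sub>v \<mu> = G *\<^sub>v u)"
  define supp where "supp = (\<lambda>\<mu> :: real vec. {i. i < n \<and> \<mu> $ i \<noteq> 0})"
  define Q where "Q = (\<lambda>c. \<exists>\<mu>. feas \<mu> \<and> card (supp \<mu>) = c)"
  have Qu: "Q (card (supp u))" unfolding Q_def feas_def using u by blast
  define c where "c = (LEAST c. Q c)"
  have Qc: "Q c" unfolding c_def by (rule LeastI[of Q, OF Qu])
  have cmin: "\<And>c'. Q c' \<Longrightarrow> c \<le> c'" unfolding c_def by (rule Least_le)
  from Qc obtain \<mu> where f\<mu>: "feas \<mu>" and c\<mu>: "card (supp \<mu>) = c" unfolding Q_def by auto
  have \<mu>: "\<mu> \<in> carrier_vec n" and \<mu>0: "\<forall>i<n. \<mu> $ i \<ge> 0" and \<mu>1: "(\<Sum>i<n. \<mu> $ i) = 1"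
    and \<mu>G: "G *\<^sub>v \<mu> = G *\<^sub>v u" using f\<mu> unfolding feas_def by auto
  have "c \<le> l"
  proof (rule ccontr)
    assume "\<not> c \<le> l"
    then have cl: "c > l" by simp
    define S where "S = supp \<mu>"
    have Sn: "S \<subseteq> {0..<n}" unfolding S_def supp_def by auto
    define Cm where "Cm = {0..<n} - S"
    have fCm: "finite Cm" unfolding Cm_def by simp
    have cardS: "card S = c" unfolding S_def using c\<mu> .
    have "card Cm = n - c" unfolding Cm_def using Sn cardS by (simp add: card_Diff_subset finite_subset)
    then have cCm: "card Cm < m" using cl mn cardS card_mono[OF _ Sn] by auto
    define idx where "idx = sorted_list_of_set Cm"
    have lidx: "length idx = card Cm" unfolding idx_def by simp
    have sidx: "set idx = Cm" unfolding idx_def using fCm by simp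
    define N where "N = mat (card Cm) m (\<lambda>(r,j). P0 $$ (idx ! r, j))"
    have N: "N \<in> carrier_mat (card Cm) m" unfolding N_def by simp
    obtain w' where w': "w' \<in> carrier_vec m" "w' \<noteq> 0\<^sub>v m" "N *\<^sub>v w' = 0\<^sub>v (card Cm)"
      using nontriv_kernel[OF N cCm] by auto
    define ext where "ext = vec n (\<lambda>i. if i < m then w' $ i else 0)"
    have ext: "ext \<in> carrier_vec n" unfolding ext_def by simp
    have extz: "\<forall>i. m \<le> i \<longrightarrow> i < n \<longrightarrow> ext $ i = 0" unfolding ext_def by simp
    define z where "z = P0 *\<^sub>v ext"
    have z: "z \<in> carrier_vec n" unfolding z_def by (rule mult_mat_vec_carrier[OF P0 ext])
    have Gz: "G *\<^sub>v z = 0\<^sub>v n" unfolding z_def by (rule ker[OF ext extz])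
    have sz0: "(\<Sum>i<n. z $ i) = 0" by (rule sz[OF z Gz])
    have zCm: "z $ i = 0" if i: "i \<in> Cm" for i
    proof -
      from i sidx obtain r where r: "r < length idx" "idx ! r = i" by (metis in_set_conv_nth)
      have iN: "i < n" using i unfolding Cm_def by auto
      have "z $ i = (\<Sum>j\<in>{0..<n}. P0 $$ (i,j) * ext $ j)" unfolding z_def using iN P0 ext
        by (simp add: scalar_prod_def)
      also have "\<dots> = (\<Sum>j\<in>{0..<m}. P0 $$ (i,j) * w' $ j)"
        using mn unfolding ext_def by (intro sum.mono_neutral_cong_right) auto
      also have "\<dots> = (N *\<^sub>v w') $ r" unfolding N_def using r lidx w'(1) r
        by (simp add: scalar_prod_def)
      also have "\<dots> = 0" using w'(3) r lidx by simp
      finally show ?thesis .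
    qed
    have zne: "z \<noteq> 0\<^sub>v n"
    proof
      assume "z = 0\<^sub>v n"
      then have "Q0 *\<^sub>v z = 0\<^sub>v n" using Q0 by (intro eq_vecI) (auto simp: scalar_prod_def)
      moreover have "Q0 *\<^sub>v z = ext" unfolding z_def using QP ext Q0 P0
        by (simp add: assoc_mult_mat_vec[symmetric, of _ n n _ n])
      ultimately have "ext = 0\<^sub>v n" by simp
      then have "w' = 0\<^sub>v m" using w'(1) mn unfolding ext_def
        by (intro eq_vecI) (auto dest!: arg_cong[of _ _ "\<lambda>v. v $ _"] simp: vec_eq_iff, metis add.commute trans_less_add2)
      then show False using w'(2) by simp
    qed
    have "\<exists>i<n. z $ i > 0"
    proof (rule ccontr)
      assume "\<not> ?thesis"
      then have np: "\<forall>i<n. - z $ i \<ge> 0" by auto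
      have "(\<Sum>i<n. - z $ i) = 0" using sz0 by (simp add: sum_negf)
      then have "\<forall>i\<in>{..<n}. - z $ i = 0" using np by (subst sum_nonneg_eq_0_iff[symmetric]) auto
      then have "z = 0\<^sub>v n" using z by (intro eq_vecI) auto
      then show False using zne by simp
    qed
    define T where "T = {i. i < n \<and> z $ i > 0}"
    have Tne: "T \<noteq> {}" and fT: "finite T" unfolding T_def using \<open>\<exists>i<n. z $ i > 0\<close> by auto
    define \<tau> where "\<tau> = Min ((\<lambda>i. \<mu> $ i / z $ i) ` T)"
    have "\<tau> \<in> (\<lambda>i. \<mu> $ i / z $ i) ` T" unfolding \<tau>_def by (rule Min_in, insert fT Tne, auto)
    then obtain i0 where i0: "i0 \<in> T" "\<tau> = \<mu> $ i0 / z $ i0" by auto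
    have \<tau>le: "\<tau> \<le> \<mu> $ i / z $ i" if "i \<in> T" for i unfolding \<tau>_def using fT that by simp
    have \<tau>0: "\<tau> \<ge> 0" using i0 \<mu>0 unfolding T_def by auto
    define \<mu>' where "\<mu>' = \<mu> - \<tau> \<cdot>\<^sub>v z"
    have \<mu>': "\<mu>' \<in> carrier_vec n" unfolding \<mu>'_def using \<mu> z by simp
    have \<mu>'i: "\<mu>' $ i = \<mu> $ i - \<tau> * z $ i" if "i < n" for i unfolding \<mu>'_def using that \<mu> z by simp
    have nn: "\<forall>i<n. \<mu>' $ i \<ge> 0"
    proof (intro allI impI)
      fix i assume i: "i < n"
      show "\<mu>' $ i \<ge> 0"
      proof (cases "z $ i > 0")
        case True
        then have "\<tau> \<le> \<mu> $ i / z $ i" using \<tau>le i unfolding T_def by auto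
        then have "\<tau> * z $ i \<le> \<mu> $ i" using True by (simp add: pos_le_divide_eq)
        then show ?thesis using \<mu>'i[OF i] by simp
      next
        case False
        then have "\<tau> * z $ i \<le> 0" using \<tau>0 by (simp add: mult_nonneg_nonpos)
        moreover have "\<mu> $ i \<ge> 0" using \<mu>0 i by simp
        ultimately show ?thesis using \<mu>'i[OF i] by simp
      qed
    qed
    have s1: "(\<Sum>i<n. \<mu>' $ i) = 1"
    proof -
      have "(\<Sum>i<n. \<mu>' $ i) = (\<Sum>i<n. \<mu> $ i - \<tau> * z $ i)" using \<mu>'i by simp
      also have "\<dots> = 1" using \<mu>1 sz0 by (simp add: sum_subtractf sum_distrib_left[symmetric])
      finally show ?thesis .
    qed
    have G': "G *\<^sub>v \<mu>' = G *\<^sub>v u"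
    proof -
      have "G *\<^sub>v \<mu>' = G *\<^sub>v \<mu> - G *\<^sub>v (\<tau> \<cdot>\<^sub>v z)" unfolding \<mu>'_def
        using mult_minus_distrib_mat_vec[OF G \<mu>, of "\<tau> \<cdot>\<^sub>v z"] z by simp
      also have "G *\<^sub>v (\<tau> \<cdot>\<^sub>v z) = 0\<^sub>v n" 
      proof -
        have "\<tau> \<cdot>\<^sub>v (0\<^sub>v n) = (0\<^sub>v n :: real vec)" by (intro eq_vecI) auto
        then show ?thesis using mult_mat_vec[OF G z, of \<tau>] Gz by simp
      qed
      finally show ?thesis using \<mu>G G u by simp
    qed
    have i0S: "i0 \<in> S"
    proof (rule ccontr)
      assume "i0 \<notin> S"
      then have "i0 \<in> Cm" using i0 unfolding Cm_def T_def by auto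
      then show False using zCm i0 unfolding T_def by auto
    qed
    have sub: "supp \<mu>' \<subseteq> S - {i0}"
    proof
      fix i assume i: "i \<in> supp \<mu>'"
      then have iN: "i < n" and ne: "\<mu>' $ i \<noteq> 0" unfolding supp_def by auto
      have "i \<noteq> i0"
      proof
        assume "i = i0"
        then have "\<mu>' $ i = \<mu> $ i0 - \<mu> $ i0 / z $ i0 * z $ i0" using \<mu>'i[OF iN] i0 by simp
        also have "\<dots> = 0" using i0(1) unfolding T_def by simp
        finally show False using ne by simp
      qed
      moreover have "i \<in> S"
      proof (rule ccontr)
        assume "i \<notin> S"
        then have "i \<in> Cm" and "\<mu> $ i = 0" using iN unfolding Cm_def S_def supp_def by auto
        then have "\<mu>' $ i = 0" using zCm \<mu>'i[OF iN] by simp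
        then show False using ne by simp
      qed
      ultimately show "i \<in> S - {i0}" by simp
    qed
    have fS: "finite S" using Sn finite_subset by blast
    have "card (supp \<mu>') \<le> card (S - {i0})" by (rule card_mono[OF _ sub], insert fS, simp)
    also have "\<dots> < c" using i0S fS cardS cl by (simp add: card_Diff1_less)
    finally have lt: "card (supp \<mu>') < c" .
    have "Q (card (supp \<mu>'))" unfolding Q_def feas_def using \<mu>' nn s1 G' by blast
    then show False using cmin lt by fastforce
  qed
  then show ?thesis using f\<mu> c\<mu> unfolding feas_def supp_def by blast
qed


lemma eig_bound: fixes M :: "real mat" assumes M: "M \<in> carrier_mat n n"
  and nn: "\<forall>i<n. \<forall>j<n. M $$ (i,j) \<ge> 0" and rs: "\<forall>i<n. (\<Sum>j<n. M $$ (i,j)) = 1"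
  and ev: "eigenvector M v a"
  shows "\<bar>a\<bar> \<le> 1"
proof -
  have v: "v \<in> carrier_vec n" and v0: "v \<noteq> 0\<^sub>v n" and Mv: "M *\<^sub>v v = a \<cdot>\<^sub>v v"
    using ev M unfolding eigenvector_def by auto
  obtain i1 where i1: "i1 < n" "v $ i1 \<noteq> 0" using v v0 by (metis carrier_vecD eq_vecI index_zero_vec(1,2))
  define mx where "mx = Max ((\<lambda>i. \<bar>v $ i\<bar>) ` {..<n})"
  have fin: "finite ((\<lambda>i. \<bar>v $ i\<bar>) ` {..<n})" by simp
  have le: "\<bar>v $ i\<bar> \<le> mx" if "i < n" for i unfolding mx_def using that fin by (intro Max_ge) auto
  have "mx \<in> (\<lambda>i. \<bar>v $ i\<bar>) ` {..<n}" unfolding mx_def by (rule Max_in[OF fin], insert i1, auto)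
  then obtain i0 where i0: "i0 < n" "\<bar>v $ i0\<bar> = mx" by auto
  have mxp: "mx > 0" using le[OF i1(1)] i1(2) by simp
  have "\<bar>a\<bar> * mx = \<bar>(M *\<^sub>v v) $ i0\<bar>" using Mv i0 v by (simp add: abs_mult)
  also have "(M *\<^sub>v v) $ i0 = (\<Sum>j<n. M $$ (i0,j) * v $ j)" using i0 M v
    by (simp add: scalar_prod_def atLeast0LessThan)
  also have "\<bar>\<dots>\<bar> \<le> (\<Sum>j<n. \<bar>M $$ (i0,j) * v $ j\<bar>)" by (rule sum_abs)
  also have "\<dots> \<le> (\<Sum>j<n. M $$ (i0,j) * mx)"
    using nn i0 le by (intro sum_mono) (simp add: abs_mult mult_left_mono)
  also have "\<dots> = mx" using rs i0 by (simp add: sum_distrib_right[symmetric])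
  finally show ?thesis using mxp by simp
qed

lemma prob_dist: fixes \<mu> :: "real vec" assumes mu: "\<mu> \<in> carrier_vec n" and nn: "\<forall>i<n. \<mu> $ i \<ge> 0"
  and s1: "(\<Sum>i<n. \<mu> $ i) = 1" and n: "n > 0"
  shows "nv (\<mu> - vec n (\<lambda>_. 1 / real n)) ^ 2 \<le> 1"
proof -
  have le1: "\<mu> $ i \<le> 1" if "i < n" for i
  proof -
    have "\<mu> $ i \<le> (\<Sum>i<n. \<mu> $ i)" using nn that by (intro member_le_sum) auto
    then show ?thesis using s1 by simp
  qed
  have "nv (\<mu> - vec n (\<lambda>_. 1 / real n)) ^ 2 = (\<Sum>i<n. (\<mu> $ i - 1 / real n) ^ 2)"
    unfolding nv_sq using mu by (simp add: scalar_prod_def atLeast0LessThan power2_eq_square)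
  also have "\<dots> = (\<Sum>i<n. \<mu> $ i ^ 2) - 2 / real n * (\<Sum>i<n. \<mu> $ i) + real n * (1 / real n) ^ 2"
    by (simp add: power2_diff sum.distrib sum_subtractf sum_distrib_left sum_divide_distrib algebra_simps)
  also have "\<dots> = (\<Sum>i<n. \<mu> $ i ^ 2) - 1 / real n" using s1 n by (simp add: power2_eq_square field_simps)
  also have "\<dots> \<le> (\<Sum>i<n. \<mu> $ i ^ 2)" using n by simp
  also have "\<dots> \<le> (\<Sum>i<n. \<mu> $ i)"
    using nn le1 by (intro sum_mono) (simp add: power2_eq_square mult_left_le)
  finally show ?thesis using s1 by simp
qed


theorem theorem1:
  fixes n d l :: nat and A :: "real mat" and ls :: "real list"
  assumes "adjacency_matrix n A"
    and "regular_graph n A d"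
    and "connected_graph n A"
    and "eigenvalues_by_abs ((1 / real d) \<cdot>\<^sub>m A) ls"
    and "1 \<le> l" and "l \<le> n - 1"
  shows "\<exists>\<mu>0 :: real vec. dim_vec \<mu>0 = n \<and> (\<forall>i<n. \<mu>0 $ i \<ge> 0) \<and>
           (\<Sum>i<n. \<mu>0 $ i) = 1 \<and> card {i. i < n \<and> \<mu>0 $ i \<noteq> 0} \<le> l \<and>
           (\<forall>k::nat. (\<Sum>i<n. (((((1 / real d) \<cdot>\<^sub>m A) ^\<^sub>m k) *\<^sub>v \<mu>0) $ i - 1 / real n)\<^sup>2)
                      \<le> (ls ! l) ^ (2 * k))"
proof -
  have A: "A \<in> carrier_mat n n" and A01: "\<forall>i<n. \<forall>j<n. A $$ (i,j) = 0 \<or> A $$ (i,j) = 1"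
    and Asym: "\<forall>i<n. \<forall>j<n. A $$ (i,j) = A $$ (j,i)"
    using assms(1) unfolding adjacency_matrix_def by auto
  have rsA: "\<forall>i<n. (\<Sum>j<n. A $$ (i,j)) = real d" using assms(2) unfolding regular_graph_def by auto
  have n2: "n \<ge> 2" using assms(5,6) by simp
  have n0: "n > 0" using n2 by simp
  have d0: "d > 0"
  proof -
    have "(0, 1) \<in> (graph_edges n A)\<^sup>*" using assms(3) n2 unfolding connected_graph_def by auto
    then have "\<exists>y. (0, y) \<in> graph_edges n A"
      by (rule converse_rtranclE) (simp, blast)
    then obtain y where "(0, y) \<in> graph_edges n A" by blast
    then have y: "y < n" "A $$ (0, y) = 1" unfolding graph_edges_def by auto
    have A0: "\<forall>j<n. A $$ (0,j) \<ge> 0" using A01 n0 by (metis order.refl zero_le_one)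
    have "A $$ (0, y) \<le> (\<Sum>j<n. A $$ (0,j))"
      using A0 y(1) by (intro member_le_sum) auto
    then have "real d \<ge> 1" using rsA n0 y by simp
    then show ?thesis by simp
  qed
  define P where "P = (1 / real d) \<cdot>\<^sub>m A"
  have P: "P \<in> carrier_mat n n" unfolding P_def using A by simp
  have Pij: "P $$ (i,j) = A $$ (i,j) / real d" if "i < n" "j < n" for i j
    unfolding P_def using A that by simp
  have S: "symm n P" unfolding symm_def using P Pij Asym by simp
  have Pnn: "\<forall>i<n. \<forall>j<n. P $$ (i,j) \<ge> 0" using Pij A01 by (metis divide_nonneg_nonneg of_nat_0_le_iff order.refl zero_le_one)
  have rs: "\<forall>i<n. (\<Sum>j<n. P $$ (i,j)) = 1"
  proof (intro allI impI)
    fix i assume i: "i < n"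
    have "(\<Sum>j<n. P $$ (i,j)) = (\<Sum>j<n. A $$ (i,j)) / real d" using Pij i by (simp add: sum_divide_distrib)
    then show "(\<Sum>j<n. P $$ (i,j)) = 1" using rsA i d0 by simp
  qed
  have cs: "\<forall>j<n. (\<Sum>i<n. P $$ (i,j)) = 1"
  proof (intro allI impI)
    fix j assume j: "j < n"
    have "(\<Sum>i<n. P $$ (i,j)) = (\<Sum>i<n. P $$ (j,i))" using S j unfolding symm_def by (intro sum.cong) auto
    then show "(\<Sum>i<n. P $$ (i,j)) = 1" using rs j by simp
  qed
  define u :: "real vec" where "u = vec n (\<lambda>_. 1 / real n)"
  have u: "u \<in> carrier_vec n" unfolding u_def by simp
  have Pu: "P *\<^sub>v u = u"
  proof (rule eq_vecI)
    fix i assume "i < dim_vec u"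
    then have i: "i < n" unfolding u_def by simp
    have "(P *\<^sub>v u) $ i = (\<Sum>j<n. P $$ (i,j)) / real n" using i P
      by (simp add: u_def scalar_prod_def atLeast0LessThan sum_divide_distrib)
    then show "(P *\<^sub>v u) $ i = u $ i" using rs i unfolding u_def by simp
  qed (insert P u, simp)
  have Pku: "(P ^\<^sub>m k) *\<^sub>v u = u" for k
  proof (induct k)
    case 0 then show ?case using P u by (simp add: carrier_matD)
  next
    case (Suc k) then show ?case using pow_suc_vec'[OF P u, of k] Pu by simp
  qed
  have u_nn: "\<forall>i<n. u $ i \<ge> 0" unfolding u_def by simp
  have u_s: "(\<Sum>i<n. u $ i) = 1" unfolding u_def using n0 by simp
  have cp: "char_poly P = (\<Prod>a\<leftarrow>ls. [:- a, 1:])" and sorted: "sorted_wrt (\<lambda>x y. \<bar>x\<bar> \<ge> \<bar>y\<bar>) ls"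
    using assms(4) unfolding eigenvalues_by_abs_def P_def by auto
  have len: "length ls = n"
    using degree_monic_char_poly[OF P] degree_linear_factors[of uminus ls] cp by simp
  define es where "es = drop l ls @ take l ls"
  have cpes: "char_poly P = (\<Prod>a\<leftarrow>es. [:- a, 1:])" unfolding cp es_def
  proof -
    have "(\<Prod>a\<leftarrow>ls. [:- a, 1:]) = (\<Prod>a\<leftarrow>take l ls @ drop l ls. [:- a, 1:])" by simp
    also have "\<dots> = (\<Prod>a\<leftarrow>take l ls. [:- a, 1:]) * (\<Prod>a\<leftarrow>drop l ls. [:- a, 1:])"
      by (simp only: map_append prod_list.append)
    also have "\<dots> = (\<Prod>a\<leftarrow>drop l ls @ take l ls. [:- a, 1:])"
      by (simp only: map_append prod_list.append mult.commute)
    finally show "(\<Prod>a\<leftarrow>ls. [:- a, 1:]) = (\<Prod>a\<leftarrow>drop l ls @ take l ls. [:- a, 1:])" .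
  qed
  obtain B P0 Q0 where sd: "schur_decomposition P es = (B, P0, Q0)" by (cases "schur_decomposition P es") auto
  from schur_decomposition[OF P cpes sd]
  have sim: "similar_mat_wit P B P0 Q0" and ut: "upper_triangular B" and dg: "diag_mat B = es" by auto
  note sw = similar_mat_witD2[OF P sim]
  have B: "B \<in> carrier_mat n n" and P0: "P0 \<in> carrier_mat n n" and Q0: "Q0 \<in> carrier_mat n n"
    and PQ: "P0 * Q0 = 1\<^sub>m n" and QP: "Q0 * P0 = 1\<^sub>m n" and PBQ: "P = P0 * B * Q0" using sw by auto
  have lenes: "length es = n" unfolding es_def using len by simp
  define m where "m = n - l"
  have ml: "m + l = n" unfolding m_def using assms(6) by simp
  have tm: "take m es = drop l ls" unfolding es_def m_def using len by simp
  have mpsim: "mp P L = P0 * mp B L * Q0" for L by (rule mp_sim[OF P B P0 Q0 PQ QP PBQ])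
  have kerB: "mp B L *\<^sub>v v = 0\<^sub>v n \<Longrightarrow> mp P L *\<^sub>v v' = 0\<^sub>v n"
    if "v' = P0 *\<^sub>v v" "v \<in> carrier_vec n" for L v v'
  proof -
    assume h: "mp B L *\<^sub>v v = 0\<^sub>v n"
    have BL: "mp B L \<in> carrier_mat n n" by (rule mp_carrier[OF B])
    have BQ: "mp B L * Q0 \<in> carrier_mat n n" using BL Q0 by simp
    have Pv: "P0 *\<^sub>v v \<in> carrier_vec n" using P0 that(2) by simp
    have "mp P L *\<^sub>v v' = (P0 * (mp B L * Q0)) *\<^sub>v (P0 *\<^sub>v v)" unfolding mpsim that(1)
      using assoc_mult_mat[OF P0 B Q0] P0 BL Q0 by (simp add: assoc_mult_mat[OF P0 BL Q0])
    also have "\<dots> = P0 *\<^sub>v ((mp B L * Q0) *\<^sub>v (P0 *\<^sub>v v))" by (rule assoc_mult_mat_vec[OF P0 BQ Pv])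
    also have "(mp B L * Q0) *\<^sub>v (P0 *\<^sub>v v) = mp B L *\<^sub>v (Q0 *\<^sub>v (P0 *\<^sub>v v))" by (rule assoc_mult_mat_vec[OF BL Q0 Pv])
    also have "Q0 *\<^sub>v (P0 *\<^sub>v v) = (Q0 * P0) *\<^sub>v v" by (rule assoc_mult_mat_vec[symmetric, OF Q0 P0 that(2)])
    also have "(Q0 * P0) *\<^sub>v v = v" using QP that(2) by simp
    also have "mp B L *\<^sub>v v = 0\<^sub>v n" by (rule h)
    also have "P0 *\<^sub>v 0\<^sub>v n = 0\<^sub>v n" using P0 by (intro eq_vecI) (auto simp: scalar_prod_def)
    finally show ?thesis .
  qed
  have ker: "mp P (drop l ls) *\<^sub>v (P0 *\<^sub>v w) = 0\<^sub>v n"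
    if "w \<in> carrier_vec n" "\<forall>i. m \<le> i \<longrightarrow> i < n \<longrightarrow> w $ i = 0" for w
    by (rule kerB[OF refl that(1)], unfold tm[symmetric], rule tri_kill[OF B ut dg _ that(1,2)], simp add: m_def)
  have full: "mp P es *\<^sub>v v = 0\<^sub>v n" if v: "v \<in> carrier_vec n" for v
  proof -
    have "mp B (take n es) *\<^sub>v (Q0 *\<^sub>v v) = 0\<^sub>v n"
      by (rule tri_kill[OF B ut dg], insert Q0 v, auto)
    then have "mp B es *\<^sub>v (Q0 *\<^sub>v v) = 0\<^sub>v n" using lenes by simp
    moreover have "v = P0 *\<^sub>v (Q0 *\<^sub>v v)" using PQ P0 Q0 v
      by (simp add: assoc_mult_mat_vec[symmetric, of _ n n _ n])
    ultimately show ?thesis using kerB[of v "Q0 *\<^sub>v v"] Q0 v by simp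
  qed
  have absl: "\<bar>a\<bar> \<le> \<bar>ls ! l\<bar>" if "a \<in> set (drop l ls)" for a
  proof -
    from that obtain j where j: "j < length (drop l ls)" "a = drop l ls ! j" by (metis in_set_conv_nth)
    then have a: "a = ls ! (l + j)" and lj: "l + j < n" using len assms(6) by auto
    show ?thesis
    proof (cases "j = 0")
      case True then show ?thesis using a by simp
    next
      case False
      then show ?thesis using sorted_wrt_nth_less[OF sorted, of l "l + j"] a lj len by simp
    qed
  qed
  have goal_eq: "(\<Sum>i<n. (((P ^\<^sub>m k) *\<^sub>v \<mu>) $ i - 1 / real n)\<^sup>2) = nv ((P ^\<^sub>m k) *\<^sub>v (\<mu> - u)) ^ 2"
    if mu: "\<mu> \<in> carrier_vec n" for \<mu> k
  proof -
    have Pk: "P ^\<^sub>m k \<in> carrier_mat n n" using P by simp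
    have "(P ^\<^sub>m k) *\<^sub>v (\<mu> - u) = (P ^\<^sub>m k) *\<^sub>v \<mu> - u"
      using mult_minus_distrib_mat_vec[OF Pk mu u] Pku by simp
    moreover have "(P ^\<^sub>m k) *\<^sub>v \<mu> \<in> carrier_vec n" using Pk mu by simp
    ultimately have "nv ((P ^\<^sub>m k) *\<^sub>v (\<mu> - u)) ^ 2 = (\<Sum>i<n. (((P ^\<^sub>m k) *\<^sub>v \<mu>) $ i - u $ i)\<^sup>2)"
      unfolding nv_sq using u by (simp add: scalar_prod_def atLeast0LessThan power2_eq_square)
    also have "\<dots> = (\<Sum>i<n. (((P ^\<^sub>m k) *\<^sub>v \<mu>) $ i - 1 / real n)\<^sup>2)"
      by (intro sum.cong) (auto simp: u_def)
    finally show ?thesis by simp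
  qed
  show ?thesis
  proof (cases "1 \<in> set (drop l ls)")
    case False
    define G where "G = mp P (drop l ls)"
    have G: "G \<in> carrier_mat n n" unfolding G_def by (rule mp_carrier[OF P])
    have sz: "(\<Sum>i<n. z $ i) = 0" if z: "z \<in> carrier_vec n" "G *\<^sub>v z = 0\<^sub>v n" for z
    proof -
      have "(\<Prod>a\<leftarrow>drop l ls. (1 - a)) * (\<Sum>i<n. z $ i) = (\<Sum>i<n. (G *\<^sub>v z) $ i)"
        unfolding G_def using colsum_mp[OF P cs z(1)] by simp
      also have "\<dots> = 0" using z(2) by simp
      finally have "(\<Prod>a\<leftarrow>drop l ls. (1 - a)) * (\<Sum>i<n. z $ i) = 0" .
      moreover have "(\<Prod>a\<leftarrow>drop l ls. (1 - a)) \<noteq> 0" using False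
        by (auto simp: prod_list_zero_iff)
      ultimately show ?thesis by simp
    qed
    obtain \<mu> where \<mu>: "\<mu> \<in> carrier_vec n" "\<forall>i<n. \<mu> $ i \<ge> 0" "(\<Sum>i<n. \<mu> $ i) = 1"
      "G *\<^sub>v \<mu> = G *\<^sub>v u" "card {i. i < n \<and> \<mu> $ i \<noteq> 0} \<le> l"
      using bfs[OF G P0 Q0 QP ker[folded G_def] sz ml u u_nn u_s] by blast
    have x: "\<mu> - u \<in> carrier_vec n" using \<mu>(1) u by simp
    have Gx: "mp P (drop l ls) *\<^sub>v (\<mu> - u) = 0\<^sub>v n"
      using mult_minus_distrib_mat_vec[OF G \<mu>(1) u] \<mu>(4) G u unfolding G_def[symmetric]
      by (simp add: vec_eq_iff)
    have bd: "(\<Sum>i<n. (((P ^\<^sub>m k) *\<^sub>v \<mu>) $ i - 1 / real n)\<^sup>2) \<le> (ls ! l) ^ (2 * k)" for k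
    proof -
      have "nv ((P ^\<^sub>m k) *\<^sub>v (\<mu> - u)) ^ 2 \<le> \<bar>ls ! l\<bar> ^ (2 * k) * nv (\<mu> - u) ^ 2"
        by (rule main_bound[OF S x Gx], insert absl, auto)
      also have "\<dots> \<le> \<bar>ls ! l\<bar> ^ (2 * k) * 1"
        using prob_dist[OF \<mu>(1,2,3) n0] by (intro mult_left_mono) (auto simp: u_def)
      also have "\<dots> = (ls ! l) ^ (2 * k)" by (simp add: power_mult power2_abs)
      finally show ?thesis using goal_eq[OF \<mu>(1)] by simp
    qed
    show ?thesis unfolding P_def[symmetric] using \<mu> bd by (intro exI[of _ \<mu>]) auto
  next
    case True
    have t1: "\<bar>ls ! l\<bar> \<ge> 1" using absl[OF True] by simp
    define \<mu> :: "real vec" where "\<mu> = vec n (\<lambda>i. if i = 0 then 1 else 0)"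
    have s1: "(\<Sum>i<n. \<mu> $ i) = 1"
    proof -
      have "(\<Sum>i<n. \<mu> $ i) = (\<Sum>i<n. if i = 0 then 1 else 0)" by (intro sum.cong) (auto simp: \<mu>_def)
      also have "\<dots> = 1" using n0 by simp
      finally show ?thesis .
    qed
    have \<mu>: "\<mu> \<in> carrier_vec n" "\<forall>i<n. \<mu> $ i \<ge> 0" "(\<Sum>i<n. \<mu> $ i) = 1"
      using s1 unfolding \<mu>_def by auto
    have supp: "{i. i < n \<and> \<mu> $ i \<noteq> 0} = {0}" unfolding \<mu>_def using n0 by (auto split: if_splits)
    have x: "\<mu> - u \<in> carrier_vec n" using \<mu>(1) u by simp
    have evb: "\<bar>a\<bar> \<le> 1" if a: "a \<in> set es" for a
    proof -
      have "a \<in> set ls" using a unfolding es_def by (metis append_take_drop_id Un_iff set_append)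
      have "poly (\<Prod>b\<leftarrow>ls. [:- b, 1:]) a = (\<Prod>b\<leftarrow>ls. a - b)" by (induct ls) (auto simp: algebra_simps)
      also have "\<dots> = 0" using \<open>a \<in> set ls\<close> by (auto simp: prod_list_zero_iff)
      finally have "eigenvalue P a" unfolding eigenvalue_root_char_poly[OF P] cp .
      then obtain v where "eigenvector P v a" unfolding eigenvalue_def by auto
      then show ?thesis by (rule eig_bound[OF P Pnn rs])
    qed
    have bd: "(\<Sum>i<n. (((P ^\<^sub>m k) *\<^sub>v \<mu>) $ i - 1 / real n)\<^sup>2) \<le> (ls ! l) ^ (2 * k)" for k
    proof -
      have "nv ((P ^\<^sub>m k) *\<^sub>v (\<mu> - u)) ^ 2 \<le> 1 ^ (2 * k) * nv (\<mu> - u) ^ 2"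
        by (rule main_bound[OF S x full[OF x]], insert evb, auto)
      also have "\<dots> \<le> 1" using prob_dist[OF \<mu>(1,2,3) n0] by (simp add: u_def)
      also have "\<dots> \<le> \<bar>ls ! l\<bar> ^ (2 * k)" using t1 by (simp add: one_le_power)
      also have "\<dots> = (ls ! l) ^ (2 * k)" by (simp add: power_mult power2_abs)
      finally show ?thesis using goal_eq[OF \<mu>(1)] by simp
    qed
    show ?thesis unfolding P_def[symmetric] using \<mu> bd supp assms(5) by (intro exI[of _ \<mu>]) auto
  qed
qed

end
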